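(* Let $R$ be a $p$-adically complete ring, $a\in R$, $M$ a $p$-complete $R$-module and $\{\phi_n\}_{n\ge0}\subset\mathrm{End}_R(M)$ with $\phi_0=\mathrm{id}_M$. Then the following are equivalent: (1) for every $n\ge0$, $\displaystyle \phi_n=\sum_{l,m\ge0}\phi_m\circ\phi_{l+n}\,(1+aX)^{-l-n}(-1)^lX^{[l]}X^{[m]}$; (2) for every $n\ge1$, $\displaystyle \phi_n=\prod_{i=0}^{n-1}(\phi_1-ia)$.
   Context: The identity in (1) is an identity of formal divided-power series in one variable $X$ with coefficients in $\mathrm{End}_R(M)$: one expands $(1+aX)^{-N}=\sum_j\binom{-N}{j}a^jX^j$, uses $X^{[m]}=X^m/m!$, and compares the coefficients of $X^{[k]}$ for each $k\ge0$ (each such coefficient is a finite $\mathbb Z$-linear combination of products of the $\phi$'s and powers of $a$); the left side is the constant series $\phi_n$. *)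

theory Defs
  imports Complex_Main "HOL-Computational_Algebra.Primes"
begin

definition p_adically_complete_ring :: "nat \<Rightarrow> 'r::comm_ring_1 itself \<Rightarrow> bool" where
  "p_adically_complete_ring p _ \<longleftrightarrow>
     (\<forall>x::'r. (\<forall>n. (of_nat p) ^ n dvd x) \<longrightarrow> x = 0) \<and>
     (\<forall>s::nat \<Rightarrow> 'r. (\<forall>n. (of_nat p) ^ n dvd (s (Suc n) - s n)) \<longrightarrow>
        (\<exists>x. \<forall>n. (of_nat p) ^ n dvd (x - s n)))"

definition p_complete_module ::
  "nat \<Rightarrow> ('r::comm_ring_1 \<Rightarrow> 'm::ab_group_add \<Rightarrow> 'm) \<Rightarrow> bool" where
  "p_complete_module p scale \<longleftrightarrow>
     (\<forall>x::'m. (\<forall>n. \<exists>y. x = scale ((of_nat p) ^ n) y) \<longrightarrow> x = 0) \<and>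
     (\<forall>s::nat \<Rightarrow> 'm. (\<forall>n. \<exists>y. s (Suc n) - s n = scale ((of_nat p) ^ n) y) \<longrightarrow>
        (\<exists>x. \<forall>n. \<exists>y. x - s n = scale ((of_nat p) ^ n) y))"

text \<open>Coefficient of the divided power X^[k] of the right-hand side of identity (1),
  applied to a vector x.  With N = l + n one has
  (1+aX)^(-N) = sum_j binom(-N,j) a^j X^j = sum_j (-1)^j pochhammer N j a^j X^[j],
  and X^[j] X^[l] X^[m] = (k!/(j! l! m!)) X^[k] for j+l+m = k, where
  k!/(j! l! m!) = (k choose j) * ((k-j) choose l).\<close>
definition rhs1_coeff ::
  "('r::comm_ring_1 \<Rightarrow> 'm::ab_group_add \<Rightarrow> 'm) \<Rightarrow> 'r \<Rightarrow> (nat \<Rightarrow> 'm \<Rightarrow> 'm)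
     \<Rightarrow> nat \<Rightarrow> nat \<Rightarrow> 'm \<Rightarrow> 'm" where
  "rhs1_coeff scale a \<phi> n k x =
     (\<Sum>j\<le>k. \<Sum>l\<le>k - j.
        scale (of_int ((-1) ^ (j + l) * pochhammer (int (l + n)) j
                        * int ((k choose j) * ((k - j) choose l))) * a ^ j)
              (\<phi> (k - j - l) (\<phi> (l + n) x)))"

text \<open>Identity (1) for a given n, as an identity of divided power series:
  the constant series phi_n equals the right-hand side, coefficientwise.\<close>
definition identity1 ::
  "('r::comm_ring_1 \<Rightarrow> 'm::ab_group_add \<Rightarrow> 'm) \<Rightarrow> 'r \<Rightarrow> (nat \<Rightarrow> 'm \<Rightarrow> 'm) \<Rightarrow> nat \<Rightarrow> bool" where
  "identity1 scale a \<phi> n \<longleftrightarrow>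
     (\<forall>k x. rhs1_coeff scale a \<phi> n k x = (if k = 0 then \<phi> n x else 0))"

fun fall_prod ::
  "('r::comm_ring_1 \<Rightarrow> 'm::ab_group_add \<Rightarrow> 'm) \<Rightarrow> 'r \<Rightarrow> ('m \<Rightarrow> 'm) \<Rightarrow> nat \<Rightarrow> 'm \<Rightarrow> 'm" where
  "fall_prod scale a f 0 = id"
| "fall_prod scale a f (Suc n) =
     (\<lambda>x. f (fall_prod scale a f n x) - scale (of_nat n * a) (fall_prod scale a f n x))"

end

theory Submission
  imports Defs "HOL-Computational_Algebra.Polynomial"
begin


definition ffT :: "'c::comm_ring_1 \<Rightarrow> 'c \<Rightarrow> nat \<Rightarrow> 'c" where
  "ffT A x s = (\<Prod>i<s. x - of_nat i * A)"

lemma ffT_0[simp]: "ffT A x 0 = 1" by (simp add: ffT_def)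
lemma ffT_Suc: "ffT A x (Suc s) = ffT A x s * (x - of_nat s * A)" by (simp add: ffT_def)

lemma vandermonde:
  "ffT A (x + y) s = (\<Sum>j\<le>s. of_nat (s choose j) * ffT A x j * ffT A y (s - j))"
proof (induction s)
  case 0 then show ?case by simp
next
  case (Suc s)
  define X where "X = ffT A x"
  define Y where "Y = ffT A y"
  have "ffT A (x + y) (Suc s) = (\<Sum>j\<le>s. of_nat (s choose j) * X j * Y (s - j) * (x + y - of_nat s * A))"
    by (simp add: ffT_Suc Suc X_def Y_def sum_distrib_right)
  also have "\<dots> = (\<Sum>j\<le>s. of_nat (s choose j) * X (Suc j) * Y (s - j)) + (\<Sum>j\<le>s. of_nat (s choose j) * X j * Y (Suc (s - j)))"
    unfolding sum.distrib[symmetric]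
  proof (rule sum.cong[OF refl])
    fix j assume "j \<in> {..s}"
    then have "of_nat s * A = of_nat j * A + of_nat (s - j) * A" 
      by (simp add: of_nat_diff algebra_simps)
    then show "of_nat (s choose j) * X j * Y (s - j) * (x + y - of_nat s * A) =
         of_nat (s choose j) * X (Suc j) * Y (s - j) + of_nat (s choose j) * X j * Y (Suc (s - j))"
      by (simp add: X_def Y_def ffT_Suc algebra_simps)
  qed
  also have "(\<Sum>j\<le>s. of_nat (s choose j) * X j * Y (Suc (s - j))) = (\<Sum>j\<le>Suc s. of_nat (s choose j) * X j * Y (Suc s - j))"
    by (simp add: Suc_diff_le binomial_eq_0)
  also have "\<dots> = X 0 * Y (Suc s) + (\<Sum>j\<le>s. of_nat (s choose Suc j) * X (Suc j) * Y (s - j))"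
    by (subst sum.atMost_Suc_shift) simp
  finally have "ffT A (x + y) (Suc s) = X 0 * Y (Suc s) + (\<Sum>j\<le>s. (of_nat (s choose j) + of_nat (s choose Suc j)) * X (Suc j) * Y (s - j))"
    by (simp add: sum.distrib algebra_simps)
  also have "\<dots> = (\<Sum>j\<le>Suc s. of_nat (Suc s choose j) * X j * Y (Suc s - j))"
    by (subst sum.atMost_Suc_shift) simp
  finally show ?case by (simp add: X_def Y_def)
qed

lemma ffT_add: "ffT A x (p + q) = ffT A x p * ffT A (x - of_nat p * A) q"
proof (induction q)
  case 0 then show ?case by simp
next
  case (Suc q)
  show ?case using Suc by (simp add: ffT_Suc algebra_simps)
qed

lemma ffT_neg: "ffT A (- (of_nat N * A)) j = of_int ((-1)^j * pochhammer (int N) j) * A ^ j"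
proof (induction j)
  case 0 then show ?case by simp
next
  case (Suc j)
  show ?case using Suc by (simp add: ffT_Suc pochhammer_rec' algebra_simps)
qed

lemma choose_swap: "j + l \<le> k \<Longrightarrow> (k choose j) * ((k - j) choose l) = (k choose l) * ((k - l) choose j)"
proof -
  assume h: "j + l \<le> k"
  have "real ((k choose j) * ((k - j) choose l)) = fact k / (fact j * fact l * fact (k - j - l))"
    using h by (simp add: binomial_fact field_simps)
  also have "\<dots> = real ((k choose l) * ((k - l) choose j))"
    using h by (simp add: binomial_fact field_simps diff_commute)
  finally show ?thesis by (simp only: of_nat_eq_iff)
qed

lemma generic:
  fixes A T :: "'c::comm_ring_1"
  shows "(\<Sum>j\<le>k. \<Sum>l\<le>k - j. of_int ((-1)^(j+l) * pochhammer (int (l+n)) j * int ((k choose j) * ((k-j) choose l))) * A^j * (ffT A T (k-j-l) * ffT A T (l+n)))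
     = (if k = 0 then ffT A T n else 0)"
proof -
  define F where "F l j = ((-1)^l * of_nat (k choose l) * ffT A T (l+n)) *
      (of_nat ((k-l) choose j) * ffT A (-(of_nat (l+n) * A)) j * ffT A T (k-l-j))" for l j
  have "(\<Sum>j\<le>k. \<Sum>l\<le>k - j. of_int ((-1)^(j+l) * pochhammer (int (l+n)) j * int ((k choose j) * ((k-j) choose l))) * A^j * (ffT A T (k-j-l) * ffT A T (l+n)))
     = (\<Sum>j\<le>k. \<Sum>l\<le>k - j. F l j)"
  proof (intro sum.cong refl)
    fix j l assume "j \<in> {..k}" "l \<in> {..k-j}"
    then have h: "j + l \<le> k" by auto
    show "of_int ((-1)^(j+l) * pochhammer (int (l+n)) j * int ((k choose j) * ((k-j) choose l))) * A^j * (ffT A T (k-j-l) * ffT A T (l+n)) = F l j"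
      unfolding F_def ffT_neg choose_swap[OF h]
      by (simp add: power_add algebra_simps diff_commute)
  qed
  also have "\<dots> = (\<Sum>j\<le>k. \<Sum>l\<in>{l\<in>{..k}. j + l \<le> k}. F l j)"
    by (intro sum.cong refl) auto
  also have "\<dots> = (\<Sum>l\<le>k. \<Sum>j\<in>{j\<in>{..k}. j + l \<le> k}. F l j)"
    by (rule sum.swap_restrict) auto
  also have "\<dots> = (\<Sum>l\<le>k. \<Sum>j\<le>k-l. F l j)"
    by (intro sum.cong refl) auto
  also have "\<dots> = (\<Sum>l\<le>k. (-1)^l * of_nat (k choose l) * ffT A T (k+n))"
  proof (intro sum.cong refl)
    fix l assume "l \<in> {..k}"
    then have h: "l \<le> k" by auto
    have "(\<Sum>j\<le>k-l. F l j) = ((-1)^l * of_nat (k choose l) * ffT A T (l+n)) *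
         ffT A (-(of_nat (l+n) * A) + T) (k-l)"
      unfolding F_def vandermonde by (simp add: sum_distrib_left algebra_simps)
    also have "\<dots> = (-1)^l * of_nat (k choose l) * ffT A T (l + n + (k - l))"
      unfolding ffT_add by (simp add: algebra_simps)
    also have "l + n + (k - l) = k + n" using h by simp
    finally show "(\<Sum>j\<le>k-l. F l j) = (-1)^l * of_nat (k choose l) * ffT A T (k+n)" .
  qed
  also have "\<dots> = (\<Sum>l\<le>k. (-1)^l * of_nat (k choose l)) * ffT A T (k+n)"
    by (simp add: sum_distrib_right)
  also have "\<dots> = (if k = 0 then ffT A T n else 0)"
    using choose_alternating_sum[of k, where 'a='c] by auto
  finally show ?thesis .
qed



definition Ev :: "('r::comm_ring_1 \<Rightarrow> 'm::ab_group_add \<Rightarrow> 'm) \<Rightarrow> ('m \<Rightarrow> 'm) \<Rightarrow> 'r poly \<Rightarrow> 'm \<Rightarrow> 'm" where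
  "Ev scale f p x = (\<Sum>i\<le>degree p. scale (coeff p i) ((f ^^ i) x))"

context
  fixes scale :: "'r::comm_ring_1 \<Rightarrow> 'm::ab_group_add \<Rightarrow> 'm" and f :: "'m \<Rightarrow> 'm"
  assumes hom: "module_hom scale scale f"
begin

interpretation F: module_hom scale scale f by (rule hom)

lemma Ev_bound: "degree p < N \<Longrightarrow> Ev scale f p x = (\<Sum>i<N. scale (coeff p i) ((f ^^ i) x))"
proof -
  assume "degree p < N"
  then show ?thesis unfolding Ev_def
    by (intro sum.mono_neutral_left) (auto simp: coeff_eq_0)
qed

lemma Ev_0[simp]: "Ev scale f 0 x = 0" by (simp add: Ev_def)

lemma Ev_pCons: "Ev scale f (pCons c p) x = scale c x + f (Ev scale f p x)"
proof -
  have "Ev scale f (pCons c p) x = (\<Sum>i<Suc (Suc (degree p)). scale (coeff (pCons c p) i) ((f ^^ i) x))"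
    by (rule Ev_bound) (use degree_pCons_le[of c p] in linarith)
  also have "\<dots> = scale c x + (\<Sum>i<Suc (degree p). scale (coeff p i) (f ((f ^^ i) x)))"
    by (subst sum.lessThan_Suc_shift) simp
  also have "(\<Sum>i<Suc (degree p). scale (coeff p i) (f ((f ^^ i) x))) = f (Ev scale f p x)"
    by (simp add: Ev_bound[where N="Suc (degree p)"] F.sum F.scale del: sum.lessThan_Suc)
  finally show ?thesis .
qed

lemma Ev_add: "Ev scale f (p + q) x = Ev scale f p x + Ev scale f q x"
proof -
  define N where "N = Suc (max (degree p) (degree q))"
  have "degree (p + q) < N" unfolding N_def using degree_add_le_max[of p q] by linarith
  then show ?thesis
    by (simp add: Ev_bound[where N=N] N_def sum.distrib F.m1.scale_left_distrib del: sum.lessThan_Suc)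
qed

lemma Ev_smult: "Ev scale f (smult c p) x = scale c (Ev scale f p x)"
proof -
  have "degree (smult c p) < Suc (degree p)" using degree_smult_le[of c p] by linarith
  then show ?thesis
    by (simp add: Ev_bound[where N="Suc (degree p)"] F.m1.scale_sum_right del: sum.lessThan_Suc)
qed

lemma Ev_mult: "Ev scale f (p * q) x = Ev scale f p (Ev scale f q x)"
proof (induction p arbitrary: x rule: pCons_induct)
  case 0 then show ?case by simp
next
  case (pCons c p)
  show ?case by (simp add: Ev_add Ev_smult Ev_pCons pCons)
qed

lemma Ev_diff: "Ev scale f (p - q) x = Ev scale f p x - Ev scale f q x"
proof -
  have "p - q = p + smult (-1) q" by simp
  then show ?thesis by (simp only: Ev_add Ev_smult F.m1.scale_minus_left F.m1.scale_one) simp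
qed

lemma Ev_sum: "Ev scale f (sum g S) x = (\<Sum>i\<in>S. Ev scale f (g i) x)"
  by (induction S rule: infinite_finite_induct) (auto simp: Ev_add)

lemma Ev_const: "Ev scale f [:c:] x = scale c x" by (simp add: Ev_def)

lemma Ev_1: "Ev scale f 1 x = x" by (simp add: Ev_def)

lemma Ev_X: "Ev scale f [:0,1:] x = f x" by (simp add: Ev_pCons Ev_const)

lemma fall_prod_Ev: "fall_prod scale a f n x = Ev scale f (ffT [:a:] [:0,1:] n) x"
proof (induction n arbitrary: x)
  case 0 then show ?case by (simp add: Ev_1)
next
  case (Suc n)
  have "ffT [:a:] [:0,1:] (Suc n) = ([:0,1:] - [:of_nat n * a:]) * ffT [:a:] [:0,1:] n"
    by (simp add: ffT_Suc of_nat_poly mult.commute)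
  then show ?case by (simp add: Ev_mult Ev_diff Ev_X Ev_const Suc Ev_pCons Ev_smult)
qed

end

lemma rhs1_k1:
  assumes "module scale" "\<phi> 0 = id"
  shows "rhs1_coeff scale a \<phi> n 1 x = \<phi> 1 (\<phi> n x) - \<phi> (Suc n) x - scale (of_nat n * a) (\<phi> n x)"
proof -
  interpret M: module scale by fact
  have e: "{..1::nat} = {0,1}" "{..0::nat} = {0}" by auto
  have "rhs1_coeff scale a \<phi> n 1 x = (\<Sum>j\<in>{0,1}. \<Sum>l\<le>1 - j.
        scale (of_int ((-1) ^ (j + l) * pochhammer (int (l + n)) j
                        * int ((1 choose j) * ((1 - j) choose l))) * a ^ j)
              (\<phi> (1 - j - l) (\<phi> (l + n) x)))" unfolding rhs1_coeff_def e ..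
  also have "\<dots> = (\<Sum>l\<in>{0,1}.
        scale (of_int ((-1) ^ l * int ((1 - l) choose 0)))
              (\<phi> (1 - l) (\<phi> (l + n) x))) + scale (- (of_nat n * a)) (\<phi> 0 (\<phi> n x))"
    by (simp add: e)
  also have "\<dots> = \<phi> 1 (\<phi> n x) - \<phi> (Suc n) x - scale (of_nat n * a) (\<phi> n x)"
    using assms(2) by simp
  finally show ?thesis .
qed


lemma const_pow: "[:c:] ^ j = [:c ^ j:]" by (induction j) (auto simp: mult.commute)

theorem mainTheorem5:
  fixes p :: nat
    and scale :: "'r::comm_ring_1 \<Rightarrow> 'm::ab_group_add \<Rightarrow> 'm"
    and a :: 'r
    and \<phi> :: "nat \<Rightarrow> 'm \<Rightarrow> 'm"
  assumes "prime p"
    and "p_adically_complete_ring p TYPE('r)"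
    and "module scale"
    and "p_complete_module p scale"
    and "\<And>n. module_hom scale scale (\<phi> n)"
    and "\<phi> 0 = id"
  shows "(\<forall>n. identity1 scale a \<phi> n) \<longleftrightarrow>
         (\<forall>n\<ge>1. \<phi> n = fall_prod scale a (\<phi> 1) n)"
proof
  interpret M: module scale by fact
  assume H: "\<forall>n. identity1 scale a \<phi> n"
  have rec: "\<phi> (Suc n) x = \<phi> 1 (\<phi> n x) - scale (of_nat n * a) (\<phi> n x)" for n x
  proof -
    have "rhs1_coeff scale a \<phi> n 1 x = 0" using H unfolding identity1_def by auto
    moreover have "rhs1_coeff scale a \<phi> n 1 x = \<phi> 1 (\<phi> n x) - \<phi> (Suc n) x - scale (of_nat n * a) (\<phi> n x)"
      by (rule rhs1_k1[where \<phi>=\<phi>, OF assms(3) assms(6)])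
    ultimately show ?thesis by (simp add: algebra_simps)
  qed
  have "\<phi> n = fall_prod scale a (\<phi> 1) n" for n
  proof (induction n)
    case 0 then show ?case using assms(6) by simp
  next
    case (Suc n)
    show ?case by (rule ext) (subst rec, simp only: Suc fall_prod.simps)
  qed
  then show "\<forall>n\<ge>1. \<phi> n = fall_prod scale a (\<phi> 1) n" by blast
next
  interpret M: module scale by fact
  assume H: "\<forall>n\<ge>1. \<phi> n = fall_prod scale a (\<phi> 1) n"
  note hom = assms(5)[of 1]
  define ff where "ff = ffT [:a:] [:0::'r,1:]"
  have phiE: "\<phi> m x = Ev scale (\<phi> 1) (ff m) x" for m x
  proof (cases "m = 0")
    case True then show ?thesis unfolding ff_def True ffT_0 Ev_1[OF hom] using assms(6) by simp
  next
    case False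
    then have "m \<ge> 1" by simp
    then have "\<phi> m = fall_prod scale a (\<phi> 1) m" using H by blast
    then show ?thesis unfolding ff_def by (simp only: fall_prod_Ev[OF hom])
  qed
  show "\<forall>n. identity1 scale a \<phi> n"
    unfolding identity1_def
  proof (intro allI)
    fix n k x
    define c where "c j l = of_int ((-1) ^ (j + l) * pochhammer (int (l + n)) j
                        * int ((k choose j) * ((k - j) choose l))) * a ^ j" for j l
    have "rhs1_coeff scale a \<phi> n k x = (\<Sum>j\<le>k. \<Sum>l\<le>k - j. Ev scale (\<phi> 1)
        ([:c j l:] * (ff (k - j - l) * ff (l + n))) x)"
      unfolding rhs1_coeff_def c_def[symmetric]
      by (intro sum.cong refl) (simp only: Ev_mult[OF hom] Ev_const[OF hom] phiE)
    also have "\<dots> = Ev scale (\<phi> 1) (\<Sum>j\<le>k. \<Sum>l\<le>k - j.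
        of_int ((-1) ^ (j + l) * pochhammer (int (l + n)) j
                        * int ((k choose j) * ((k - j) choose l))) * [:a:] ^ j * (ff (k - j - l) * ff (l + n))) x"
    proof -
      have pc: "[:c j l:] = of_int ((-1) ^ (j + l) * pochhammer (int (l + n)) j
                        * int ((k choose j) * ((k - j) choose l))) * [:a:] ^ j" for j l
        unfolding c_def const_pow of_int_poly by simp
      show ?thesis unfolding pc[symmetric] Ev_sum[OF hom] ..
    qed
    also have "\<dots> = Ev scale (\<phi> 1) (if k = 0 then ff n else 0) x"
      unfolding ff_def by (subst generic) (rule refl)
    also have "\<dots> = (if k = 0 then \<phi> n x else 0)"
      by (cases "k = 0") (simp_all only: phiE if_True if_False Ev_0[OF hom] refl)
    finally show "rhs1_coeff scale a \<phi> n k x = (if k = 0 then \<phi> n x else 0)" .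
  qed
qed

end
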